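(* Take $g_k(x)=|x|$ for all $k$, and assume (H1) and (H2) for $(X_1,\ldots,X_d)$ and for the aggregated vector below. Let $CR\subseteq\{1,\ldots,d\}$ be a set of $r\le d$ indices such that the risks $(X_k)_{k\in CR}$ are comonotonic. Let $(u_1,\ldots,u_d)=A_{X_1,\ldots,X_d}(u)$. Then the optimal allocation of $u$ for the vector consisting of the risks $X_i$, $i\in\{1,\ldots,d\}\setminus CR$, together with the single aggregated risk $\sum_{k\in CR}X_k$, is $A_{(X_i)_{i\notin CR},\,\sum_{k\in CR}X_k}(u)=\big((u_i)_{i\notin CR},\ \sum_{k\in CR}u_k\big)$.
   Context: For a vector $\mathbf Y=(Y_1,\ldots,Y_m)$ of nonnegative random variables and capital $u\ge0$, $\mathcal{U}^m_u=\{v\in[0,u]^m:\sum_k v_k=u\}$ and $I_{\mathbf Y}(v)=\sum_{k=1}^m\mathbb{E}[g_k(v_k-Y_k)\mathbf 1_{\{Y_k>v_k\}}\mathbf 1_{\{\sum_l Y_l\le u\}}]$; with $g_k(x)=|x|$ this is $\sum_k\mathbb{E}[(Y_k-v_k)^+\mathbf 1_{\{\sum_l Y_l\le u\}}]$. (H1): $I_{\mathbf Y}$ has a unique minimizer on $\mathcal{U}^m_u$, denoted $A_{Y_1,\ldots,Y_m}(u)$ (the optimal allocation). (H2): the $g_k$ are differentiable, the relevant $g_k'(v_k-Y_k)$ are integrable, and each pair $(Y_k,\sum_l Y_l)$ has a joint density. Random variables $(Z_1,\ldots,Z_n)$ are comonotonic if there exist a random variable $W$ and non-decreasing functions $\varphi_1,\ldots,\varphi_n$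 with $(Z_1,\ldots,Z_n)\overset{d}{=}(\varphi_1(W),\ldots,\varphi_n(W))$. *)

theory Defs
  imports "HOL-Probability.Probability"
begin

definition alloc_set :: "'i set \<Rightarrow> real \<Rightarrow> ('i \<Rightarrow> real) set" where
  "alloc_set I u = {v. (\<forall>k\<in>I. 0 \<le> v k \<and> v k \<le> u) \<and> (\<forall>k. k \<notin> I \<longrightarrow> v k = 0)
                        \<and> (\<Sum>k\<in>I. v k) = u}"

definition risk_ind ::
  "('i \<Rightarrow> real \<Rightarrow> real) \<Rightarrow> 'a measure \<Rightarrow> ('i \<Rightarrow> 'a \<Rightarrow> real) \<Rightarrow> 'i set \<Rightarrow> real
   \<Rightarrow> ('i \<Rightarrow> real) \<Rightarrow> real" where
  "risk_ind g M Y I u v =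
     (\<Sum>k\<in>I. integral\<^sup>L M (\<lambda>\<omega>. g k (v k - Y k \<omega>)
         * indicator {\<omega>. Y k \<omega> > v k} \<omega>
         * indicator {\<omega>. (\<Sum>l\<in>I. Y l \<omega>) \<le> u} \<omega>))"

definition is_minimizer ::
  "('i \<Rightarrow> real \<Rightarrow> real) \<Rightarrow> 'a measure \<Rightarrow> ('i \<Rightarrow> 'a \<Rightarrow> real) \<Rightarrow> 'i set \<Rightarrow> real
   \<Rightarrow> ('i \<Rightarrow> real) \<Rightarrow> bool" where
  "is_minimizer g M Y I u v \<longleftrightarrow>
     v \<in> alloc_set I u \<and> (\<forall>w\<in>alloc_set I u. risk_ind g M Y I u v \<le> risk_ind g M Y I u w)"

definition H1 ::
  "('i \<Rightarrow> real \<Rightarrow> real) \<Rightarrow> 'a measure \<Rightarrow> ('i \<Rightarrow> 'a \<Rightarrow> real) \<Rightarrow> 'i set \<Rightarrow> real \<Rightarrow> bool" where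
  "H1 g M Y I u \<longleftrightarrow> (\<exists>!v. is_minimizer g M Y I u v)"

definition opt_alloc ::
  "('i \<Rightarrow> real \<Rightarrow> real) \<Rightarrow> 'a measure \<Rightarrow> ('i \<Rightarrow> 'a \<Rightarrow> real) \<Rightarrow> 'i set \<Rightarrow> real \<Rightarrow> ('i \<Rightarrow> real)" where
  "opt_alloc g M Y I u = (THE v. is_minimizer g M Y I u v)"

definition has_joint_density :: "'a measure \<Rightarrow> ('a \<Rightarrow> real) \<Rightarrow> ('a \<Rightarrow> real) \<Rightarrow> bool" where
  "has_joint_density M Z1 Z2 \<longleftrightarrow>
     (\<exists>f. distributed M (lborel \<Otimes>\<^sub>M lborel) (\<lambda>\<omega>. (Z1 \<omega>, Z2 \<omega>)) f)"

text \<open>(H2) specialised to g_k = |.|: measurable risks, integrable derivatives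
  g_k'(v_k - Y_k) = sgn(v_k - Y_k), and each pair (Y_k, sum_l Y_l) has a joint density.\<close>
definition H2_abs :: "'a measure \<Rightarrow> ('i \<Rightarrow> 'a \<Rightarrow> real) \<Rightarrow> 'i set \<Rightarrow> real \<Rightarrow> bool" where
  "H2_abs M Y I u \<longleftrightarrow>
     (\<forall>k\<in>I. Y k \<in> borel_measurable M)
   \<and> (\<forall>v\<in>alloc_set I u. \<forall>k\<in>I. integrable M (\<lambda>\<omega>. sgn (v k - Y k \<omega>)))
   \<and> (\<forall>k\<in>I. has_joint_density M (Y k) (\<lambda>\<omega>. \<Sum>l\<in>I. Y l \<omega>))"

definition comonotonic :: "'a measure \<Rightarrow> ('i \<Rightarrow> 'a \<Rightarrow> real) \<Rightarrow> 'i set \<Rightarrow> bool" where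
  "comonotonic M Z C \<longleftrightarrow>
     (\<exists>W \<phi>. W \<in> borel_measurable M \<and> (\<forall>k\<in>C. mono (\<phi> k :: real \<Rightarrow> real)) \<and>
        distr M (PiM C (\<lambda>_. borel)) (\<lambda>\<omega>. \<lambda>k\<in>C. Z k \<omega>)
      = distr M (PiM C (\<lambda>_. borel)) (\<lambda>\<omega>. \<lambda>k\<in>C. \<phi> k (W \<omega>)))"

text \<open>Aggregated vector: indices Some i for i outside CR, and None for the aggregate.\<close>
definition agg_risks :: "('i \<Rightarrow> 'a \<Rightarrow> real) \<Rightarrow> 'i set \<Rightarrow> 'i option \<Rightarrow> 'a \<Rightarrow> real" where
  "agg_risks X CR j = (case j of None \<Rightarrow> (\<lambda>\<omega>. \<Sum>k\<in>CR. X k \<omega>) | Some i \<Rightarrow> X i)"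

definition agg_index :: "'i set \<Rightarrow> 'i set \<Rightarrow> 'i option set" where
  "agg_index D CR = Some ` (D - CR) \<union> {None}"

end

theory Submission
  imports Defs
begin


definition Fk :: "'a measure \<Rightarrow> ('i \<Rightarrow> 'a \<Rightarrow> real) \<Rightarrow> 'i set \<Rightarrow> real \<Rightarrow> 'i \<Rightarrow> real \<Rightarrow> real" where
  "Fk M Y I u k a = integral\<^sup>L M (\<lambda>\<omega>. \<bar>a - Y k \<omega>\<bar> * indicator {\<omega>. Y k \<omega> > a} \<omega>
       * indicator {\<omega>. (\<Sum>l\<in>I. Y l \<omega>) \<le> u} \<omega>)"

lemma risk_ind_Fk: "risk_ind (\<lambda>_. abs) M Y I u v = (\<Sum>k\<in>I. Fk M Y I u k (v k))"
  by (simp add: risk_ind_def Fk_def)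

lemma arch:
  fixes e d :: real assumes "0 < e" "0 < d" shows "\<exists>n. e / real (Suc n) < d"
proof -
  obtain n where n: "e / d < real n" using reals_Archimedean2 by blast
  have "e < d * real n" using n assms by (simp add: divide_less_eq mult.commute)
  also have "\<dots> \<le> d * real (Suc n)" using assms by simp
  finally have "e / real (Suc n) < d" by (simp add: divide_less_eq mult.commute)
  thus ?thesis by blast
qed

locale riskset =
  fixes M :: "'a measure" and Y :: "'i \<Rightarrow> 'a \<Rightarrow> real" and I :: "'i set" and u :: real
  assumes P: "prob_space M" and fin: "finite I"
    and meas: "\<And>k. k \<in> I \<Longrightarrow> Y k \<in> borel_measurable M"
    and nn: "\<And>k \<omega>. k \<in> I \<Longrightarrow> \<omega> \<in> space M \<Longrightarrow> 0 \<le> Y k \<omega>"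
begin

abbreviation "S \<equiv> (\<lambda>\<omega>. \<Sum>l\<in>I. Y l \<omega>)"

lemma S_meas[measurable]: "S \<in> borel_measurable M"
  using meas by (intro borel_measurable_sum) auto

lemma fm: "finite_measure M" using P prob_space_def by blast

lemma f_integrable:
  assumes k: "k \<in> I"
  shows "integrable M (\<lambda>\<omega>. \<bar>a - Y k \<omega>\<bar> * indicator {\<omega>. Y k \<omega> > a} \<omega>
       * indicator {\<omega>. (\<Sum>l\<in>I. Y l \<omega>) \<le> u} \<omega>)"
proof (rule finite_measure.integrable_const_bound[OF fm, where B="\<bar>a\<bar> + \<bar>u\<bar>"])
  have [measurable]: "Y k \<in> borel_measurable M" using meas k by auto
  show "(\<lambda>\<omega>. \<bar>a - Y k \<omega>\<bar> * indicator {\<omega>. Y k \<omega> > a} \<omega>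
       * indicator {\<omega>. (\<Sum>l\<in>I. Y l \<omega>) \<le> u} \<omega>) \<in> borel_measurable M" by measurable
  show "AE x in M. norm (\<bar>a - Y k x\<bar> * indicator {\<omega>. Y k \<omega> > a} x
       * indicator {\<omega>. (\<Sum>l\<in>I. Y l \<omega>) \<le> u} x) \<le> \<bar>a\<bar> + \<bar>u\<bar>"
  proof (rule AE_I2)
    fix x assume x: "x \<in> space M"
    have "Y k x \<le> S x" using k fin nn[OF _ x] by (intro member_le_sum) auto
    moreover have "0 \<le> Y k x" using nn k x by auto
    ultimately show "norm (\<bar>a - Y k x\<bar> * indicator {\<omega>. Y k \<omega> > a} x
       * indicator {\<omega>. (\<Sum>l\<in>I. Y l \<omega>) \<le> u} x) \<le> \<bar>a\<bar> + \<bar>u\<bar>"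
      by (auto simp: indicator_def)
  qed
qed

lemma Fk_compare:
  assumes k: "k \<in> I"
    and pw: "\<And>y. y \<ge> 0 \<Longrightarrow> \<bar>w - y\<bar> * (if y > w then 1 else 0) \<ge> \<bar>v - y\<bar> * (if y > v then 1 else 0) + c * (if R y then 1 else 0)"
    and E: "{\<omega>\<in>space M. R (Y k \<omega>) \<and> S \<omega> \<le> u} \<in> sets M"
  shows "Fk M Y I u k w \<ge> Fk M Y I u k v + c * measure M {\<omega>\<in>space M. R (Y k \<omega>) \<and> S \<omega> \<le> u}"
proof -
  let ?E = "{\<omega>\<in>space M. R (Y k \<omega>) \<and> S \<omega> \<le> u}"
  have iE: "integrable M (indicator ?E :: 'a \<Rightarrow> real)"
    using E finite_measure.emeasure_finite[OF fm] by (auto intro!: integrable_real_indicator simp: less_top[symmetric])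
  have "Fk M Y I u k v + c * measure M ?E
      = integral\<^sup>L M (\<lambda>\<omega>. \<bar>v - Y k \<omega>\<bar> * indicator {\<omega>. Y k \<omega> > v} \<omega>
       * indicator {\<omega>. (\<Sum>l\<in>I. Y l \<omega>) \<le> u} \<omega> + c * indicator ?E \<omega>)"
    unfolding Fk_def using f_integrable[OF k] iE
    by (simp add: Bochner_Integration.integral_add Int_absorb2)
  also have "\<dots> \<le> Fk M Y I u k w" unfolding Fk_def
  proof (rule integral_mono)
    show "integrable M (\<lambda>\<omega>. \<bar>v - Y k \<omega>\<bar> * indicator {\<omega>. Y k \<omega> > v} \<omega>
       * indicator {\<omega>. (\<Sum>l\<in>I. Y l \<omega>) \<le> u} \<omega> + c * indicator ?E \<omega>)"
      using f_integrable[OF k] iE by auto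
    show "integrable M (\<lambda>\<omega>. \<bar>w - Y k \<omega>\<bar> * indicator {\<omega>. Y k \<omega> > w} \<omega>
       * indicator {\<omega>. (\<Sum>l\<in>I. Y l \<omega>) \<le> u} \<omega>)" using f_integrable[OF k] .
    fix x assume x: "x \<in> space M"
    have y: "Y k x \<ge> 0" using nn k x by auto
    show "\<bar>v - Y k x\<bar> * indicator {\<omega>. Y k \<omega> > v} x
       * indicator {\<omega>. (\<Sum>l\<in>I. Y l \<omega>) \<le> u} x + c * indicator ?E x
       \<le> \<bar>w - Y k x\<bar> * indicator {\<omega>. Y k \<omega> > w} x
       * indicator {\<omega>. (\<Sum>l\<in>I. Y l \<omega>) \<le> u} x"
      using pw[OF y] x by (auto simp: indicator_def)
  qed
  finally show ?thesis .
qed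


lemma pw_gen:
  fixes v w y :: real
  shows "\<bar>w - y\<bar> * (if y > w then 1 else 0) \<ge> \<bar>v - y\<bar> * (if y > v then 1 else 0) + (v - w) * (if y \<ge> v then 1 else 0)"
    and "\<bar>w - y\<bar> * (if y > w then 1 else 0) \<ge> \<bar>v - y\<bar> * (if y > v then 1 else 0) + (v - w) * (if y > v then 1 else 0)"
  by auto

lemma suff:
  assumes v: "v \<in> alloc_set I u"
   and pl: "\<forall>j\<in>I. measure M {\<omega>\<in>space M. Y j \<omega> > v j \<and> S \<omega> \<le> u} \<le> L"
   and ql: "\<forall>j\<in>I. v j > 0 \<longrightarrow> measure M {\<omega>\<in>space M. Y j \<omega> \<ge> v j \<and> S \<omega> \<le> u} \<ge> L"
  shows "is_minimizer (\<lambda>_. abs) M Y I u v"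
  unfolding is_minimizer_def
proof (intro conjI ballI)
  show "v \<in> alloc_set I u" by fact
  fix w assume w: "w \<in> alloc_set I u"
  have key: "Fk M Y I u j (w j) \<ge> Fk M Y I u j (v j) + (v j - w j) * L" if j: "j \<in> I" for j
  proof -
    have [measurable]: "Y j \<in> borel_measurable M" using meas j by auto
    show ?thesis
    proof (cases "w j \<le> v j")
      case True
      let ?q = "measure M {\<omega>\<in>space M. Y j \<omega> \<ge> v j \<and> S \<omega> \<le> u}"
      have "Fk M Y I u j (w j) \<ge> Fk M Y I u j (v j) + (v j - w j) * ?q"
        by (rule Fk_compare[OF j, where R="\<lambda>y. y \<ge> v j"]) (use pw_gen(1) in auto)
      moreover have "(v j - w j) * ?q \<ge> (v j - w j) * L"
      proof (cases "v j > 0")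
        case True thus ?thesis using ql j \<open>w j \<le> v j\<close> by (auto intro: mult_left_mono)
      next
        case False
        hence "v j = 0" "w j = 0" using v w j True by (auto simp: alloc_set_def)
        thus ?thesis by simp
      qed
      ultimately show ?thesis by linarith
    next
      case False
      let ?p = "measure M {\<omega>\<in>space M. Y j \<omega> > v j \<and> S \<omega> \<le> u}"
      have "Fk M Y I u j (w j) \<ge> Fk M Y I u j (v j) + (v j - w j) * ?p"
        by (rule Fk_compare[OF j, where R="\<lambda>y. y > v j"]) (use pw_gen(2) in auto)
      moreover have "(v j - w j) * ?p \<ge> (v j - w j) * L"
        using pl j False by (auto intro: mult_left_mono_neg)
      ultimately show ?thesis by linarith
    qed
  qed
  have "(\<Sum>j\<in>I. Fk M Y I u j (v j)) + (\<Sum>j\<in>I. v j - w j) * L \<le> (\<Sum>j\<in>I. Fk M Y I u j (w j))"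
    using key by (simp add: sum_distrib_right sum.distrib[symmetric] sum_mono)
  moreover have "(\<Sum>j\<in>I. v j - w j) = 0" using v w by (simp add: alloc_set_def sum_subtractf)
  ultimately show "risk_ind (\<lambda>_. abs) M Y I u v \<le> risk_ind (\<lambda>_. abs) M Y I u w"
    by (simp add: risk_ind_Fk)
qed

lemma necess_eps:
  assumes min: "is_minimizer (\<lambda>_. abs) M Y I u v" and k: "k \<in> I" and j: "j \<in> I" "j \<noteq> k"
    and e: "0 < e" "e \<le> v k"
  shows "measure M {\<omega>\<in>space M. Y j \<omega> > v j + e \<and> S \<omega> \<le> u}
       \<le> measure M {\<omega>\<in>space M. Y k \<omega> > v k - e \<and> S \<omega> \<le> u}"
proof -
  have vA: "v \<in> alloc_set I u" using min by (simp add: is_minimizer_def)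
  define w where "w = (\<lambda>i. v i + (if i = j then e else 0) - (if i = k then e else 0))"
  have "v j + v k = (\<Sum>i\<in>{j,k}. v i)" using j by simp
  also have "\<dots> \<le> (\<Sum>i\<in>I. v i)" using vA j k fin by (intro sum_mono2) (auto simp: alloc_set_def)
  finally have jk: "v j + v k \<le> u" using vA by (simp add: alloc_set_def)
  have wA: "w \<in> alloc_set I u"
    using vA j k e jk fin unfolding alloc_set_def w_def
    by (auto simp: sum.distrib sum_subtractf)
  have "risk_ind (\<lambda>_. abs) M Y I u v \<le> risk_ind (\<lambda>_. abs) M Y I u w"
    using min wA by (simp add: is_minimizer_def)
  hence "0 \<le> (\<Sum>i\<in>I. Fk M Y I u i (w i) - Fk M Y I u i (v i))"
    by (simp add: risk_ind_Fk sum_subtractf)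
  also have "(\<Sum>i\<in>I. Fk M Y I u i (w i) - Fk M Y I u i (v i))
     = (\<Sum>i\<in>I. (if i = j then Fk M Y I u j (v j + e) - Fk M Y I u j (v j) else 0)
          + (if i = k then Fk M Y I u k (v k - e) - Fk M Y I u k (v k) else 0))"
    by (rule sum.cong) (use j in \<open>auto simp: w_def\<close>)
  also have "\<dots> = (Fk M Y I u j (v j + e) - Fk M Y I u j (v j)) + (Fk M Y I u k (v k - e) - Fk M Y I u k (v k))"
    using j k fin by (simp add: sum.distrib)
  finally have 0: "0 \<le> (Fk M Y I u j (v j + e) - Fk M Y I u j (v j)) + (Fk M Y I u k (v k - e) - Fk M Y I u k (v k))" .
  have [measurable]: "Y j \<in> borel_measurable M" "Y k \<in> borel_measurable M" using meas j k by auto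
  have 1: "Fk M Y I u j (v j) \<ge> Fk M Y I u j (v j + e) + e * measure M {\<omega>\<in>space M. Y j \<omega> > v j + e \<and> S \<omega> \<le> u}"
    using Fk_compare[OF j(1), where R="\<lambda>y. y > v j + e" and w="v j" and v="v j + e" and c=e] pw_gen(2)[of "v j" _ "v j + e"]
    by auto
  have 2: "Fk M Y I u k (v k) \<ge> Fk M Y I u k (v k - e) + (-e) * measure M {\<omega>\<in>space M. Y k \<omega> > v k - e \<and> S \<omega> \<le> u}"
    using Fk_compare[OF k, where R="\<lambda>y. y > v k - e" and w="v k" and v="v k - e" and c="-e"] pw_gen(2)[of "v k" _ "v k - e"]
    by auto
  from 0 1 2 have "e * measure M {\<omega>\<in>space M. Y j \<omega> > v j + e \<and> S \<omega> \<le> u}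
     \<le> e * measure M {\<omega>\<in>space M. Y k \<omega> > v k - e \<and> S \<omega> \<le> u}" by linarith
  thus ?thesis using e by simp
qed

lemma necess:
  assumes min: "is_minimizer (\<lambda>_. abs) M Y I u v" and k: "k \<in> I" "v k > 0" and j: "j \<in> I" "j \<noteq> k"
  shows "measure M {\<omega>\<in>space M. Y j \<omega> > v j \<and> S \<omega> \<le> u}
       \<le> measure M {\<omega>\<in>space M. Y k \<omega> \<ge> v k \<and> S \<omega> \<le> u}"
proof -
  have [measurable]: "Y j \<in> borel_measurable M" "Y k \<in> borel_measurable M" using meas j k by auto
  define e where "e n = v k / real (Suc n)" for n
  have epos: "0 < e n" for n using k by (simp add: e_def)
  have ele: "e n \<le> v k" for n using k by (simp add: e_def divide_le_eq)
  have emono: "e n \<le> e m" if "m \<le> n" for m n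
    using k that by (simp add: e_def frac_le)
  define A where "A n = {\<omega>\<in>space M. Y j \<omega> > v j + e n \<and> S \<omega> \<le> u}" for n
  define B where "B n = {\<omega>\<in>space M. Y k \<omega> > v k - e n \<and> S \<omega> \<le> u}" for n
  have "(\<lambda>n. measure M (A n)) \<longlonglongrightarrow> measure M (\<Union>(range A))"
  proof (rule finite_measure.finite_Lim_measure_incseq[OF fm])
    show "range A \<subseteq> sets M" proof (rule image_subsetI) fix n show "A n \<in> sets M" unfolding A_def by measurable qed
    show "incseq A" unfolding incseq_def A_def
    proof (intro allI impI subsetI)
      fix m n x assume mn: "m \<le> n" and x: "x \<in> {\<omega>\<in>space M. Y j \<omega> > v j + e m \<and> S \<omega> \<le> u}"
      show "x \<in> {\<omega>\<in>space M. Y j \<omega> > v j + e n \<and> S \<omega> \<le> u}" using emono[OF mn] x by auto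
    qed
  qed
  moreover have "\<Union>(range A) = {\<omega>\<in>space M. Y j \<omega> > v j \<and> S \<omega> \<le> u}"
  proof (intro equalityI subsetI)
    fix x assume "x \<in> \<Union>(range A)" thus "x \<in> {\<omega>\<in>space M. Y j \<omega> > v j \<and> S \<omega> \<le> u}"
    proof -
      from \<open>x \<in> \<Union>(range A)\<close> obtain n where "x \<in> A n" by auto
      thus ?thesis unfolding A_def using epos[of n] by auto
    qed
  next
    fix x assume x: "x \<in> {\<omega>\<in>space M. Y j \<omega> > v j \<and> S \<omega> \<le> u}"
    then obtain n where "v k / real (Suc n) < Y j x - v j"
      using arch[of "v k" "Y j x - v j"] k x by auto
    hence "x \<in> A n" using x unfolding A_def e_def by auto
    thus "x \<in> \<Union>(range A)" by blast
  qed
  moreover have "(\<lambda>n. measure M (B n)) \<longlonglongrightarrow> measure M (\<Inter>(range B))"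
  proof (rule finite_measure.finite_Lim_measure_decseq[OF fm])
    show "range B \<subseteq> sets M" proof (rule image_subsetI) fix n show "B n \<in> sets M" unfolding B_def by measurable qed
    show "decseq B" unfolding decseq_def B_def
    proof (intro allI impI subsetI)
      fix m n x assume mn: "m \<le> n" and x: "x \<in> {\<omega>\<in>space M. Y k \<omega> > v k - e n \<and> S \<omega> \<le> u}"
      show "x \<in> {\<omega>\<in>space M. Y k \<omega> > v k - e m \<and> S \<omega> \<le> u}" using emono[OF mn] x by auto
    qed
  qed
  moreover have "\<Inter>(range B) = {\<omega>\<in>space M. Y k \<omega> \<ge> v k \<and> S \<omega> \<le> u}"
  proof (intro equalityI subsetI)
    fix x assume x: "x \<in> \<Inter>(range B)"
    hence xs: "x \<in> space M" "S x \<le> u" unfolding B_def by auto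
    have "Y k x \<ge> v k"
    proof (rule ccontr)
      assume "\<not> Y k x \<ge> v k"
      then obtain n where "v k / real (Suc n) < v k - Y k x"
        using arch[of "v k" "v k - Y k x"] k \<open>\<not> Y k x \<ge> v k\<close> by auto
      moreover have "x \<in> B n" using x by auto
      ultimately show False unfolding B_def e_def by auto
    qed
    thus "x \<in> {\<omega>\<in>space M. Y k \<omega> \<ge> v k \<and> S \<omega> \<le> u}" using xs by auto
  next
    fix x assume "x \<in> {\<omega>\<in>space M. Y k \<omega> \<ge> v k \<and> S \<omega> \<le> u}"
    hence "x \<in> B n" for n unfolding B_def using epos[of n] by auto
    thus "x \<in> \<Inter>(range B)" by auto
  qed
  moreover have "\<forall>n. measure M (A n) \<le> measure M (B n)"
    unfolding A_def B_def using necess_eps[OF min k(1) j epos ele] by auto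
  ultimately show ?thesis
    using LIMSEQ_le[of "\<lambda>n. measure M (A n)" _ "\<lambda>n. measure M (B n)"] by auto
qed

end


lemma finite_total_max:
  assumes "finite S" "S \<noteq> {}" "\<forall>x\<in>S. \<forall>y\<in>S. R x y \<or> R y x"
    "\<forall>x\<in>S. \<forall>y\<in>S. \<forall>z\<in>S. R x y \<longrightarrow> R y z \<longrightarrow> R x z"
  shows "\<exists>m\<in>S. \<forall>x\<in>S. R x m"
  using assms
proof (induction S rule: finite_ne_induct)
  case (singleton x)
  have "R x x" using singleton.prems(1) by simp
  thus ?case by simp
next
  case (insert x F)
  note p1 = insert.prems(1) and p2 = insert.prems(2)
  have tot: "\<forall>a\<in>F. \<forall>b\<in>F. R a b \<or> R b a" using p1 by simp
  have tr: "\<forall>a\<in>F. \<forall>b\<in>F. \<forall>c\<in>F. R a b \<longrightarrow> R b c \<longrightarrow> R a c" using p2 by blast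
  obtain m where m: "m \<in> F" "\<forall>y\<in>F. R y m" using insert.IH[OF tot tr] by blast
  have xx: "R x x" using p1 by simp
  have xm: "R m x \<or> R x m" using p1 m(1) by simp
  show ?case
  proof (cases "R m x")
    case True
    have "R y x" if y: "y \<in> insert x F" for y
    proof (cases "y = x")
      case True thus ?thesis using xx by simp
    next
      case False
      hence yF: "y \<in> F" using y by simp
      have "R y m" using m yF by simp
      thus ?thesis
        using p2[rule_format, of y m x] \<open>R m x\<close> yF m(1) by simp
    qed
    thus ?thesis by blast
  next
    case False
    hence "R x m" using xm by simp
    hence "\<forall>y\<in>insert x F. R y m" using m by simp
    thus ?thesis using m(1) by blast
  qed
qed

lemma comon_AE:
  fixes X :: "'i \<Rightarrow> 'a \<Rightarrow> real"
  assumes com: "comonotonic M X CR" and meas: "\<And>k. k \<in> CR \<Longrightarrow> X k \<in> borel_measurable M"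
   and k: "k \<in> CR" and j: "j \<in> CR"
   and Pm: "{y\<in>space borel. P y} \<in> sets borel" and Pu: "\<And>y y'. y \<le> y' \<Longrightarrow> P y \<Longrightarrow> P y'"
   and Qm: "{y\<in>space borel. Q y} \<in> sets borel" and Qu: "\<And>y y'. y \<le> y' \<Longrightarrow> Q y \<Longrightarrow> Q y'"
  shows "(AE \<omega> in M. P (X k \<omega>) \<longrightarrow> Q (X j \<omega>)) \<or> (AE \<omega> in M. Q (X j \<omega>) \<longrightarrow> P (X k \<omega>))"
proof -
  have "\<exists>W \<phi>. W \<in> borel_measurable M \<and> (\<forall>k\<in>CR. mono (\<phi> k :: real \<Rightarrow> real)) \<and>
        distr M (PiM CR (\<lambda>_. borel)) (\<lambda>\<omega>. \<lambda>k\<in>CR. X k \<omega>)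
      = distr M (PiM CR (\<lambda>_. borel)) (\<lambda>\<omega>. \<lambda>k\<in>CR. \<phi> k (W \<omega>))"
    using com unfolding comonotonic_def .
  then obtain W \<phi> where c: "W \<in> borel_measurable M \<and> (\<forall>k\<in>CR. mono (\<phi> k :: real \<Rightarrow> real)) \<and>
        distr M (PiM CR (\<lambda>_. borel)) (\<lambda>\<omega>. \<lambda>k\<in>CR. X k \<omega>)
      = distr M (PiM CR (\<lambda>_. borel)) (\<lambda>\<omega>. \<lambda>k\<in>CR. \<phi> k (W \<omega>))"
    by (elim exE)
  have W: "W \<in> borel_measurable M" using c by (rule conjunct1)
  have mono: "\<forall>k\<in>CR. mono (\<phi> k)" using c by (intro conjunct1[OF conjunct2[OF c]])
  have deq: "distr M (PiM CR (\<lambda>_. borel)) (\<lambda>\<omega>. \<lambda>k\<in>CR. X k \<omega>)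
      = distr M (PiM CR (\<lambda>_. borel)) (\<lambda>\<omega>. \<lambda>k\<in>CR. \<phi> k (W \<omega>))"
    by (rule conjunct2[OF conjunct2[OF c]])
  let ?N = "PiM CR (\<lambda>_. borel) :: ('i \<Rightarrow> real) measure"
  have fX: "(\<lambda>\<omega>. \<lambda>k\<in>CR. X k \<omega>) \<in> M \<rightarrow>\<^sub>M ?N"
    by (rule measurable_restrict) (rule meas)
  have fP: "(\<lambda>\<omega>. \<lambda>k\<in>CR. \<phi> k (W \<omega>)) \<in> M \<rightarrow>\<^sub>M ?N"
  proof (rule measurable_restrict)
    fix i assume "i \<in> CR"
    hence "\<phi> i \<in> borel_measurable borel" using mono borel_measurable_mono by blast
    thus "(\<lambda>\<omega>. \<phi> i (W \<omega>)) \<in> borel_measurable M" by (rule measurable_compose[OF W])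
  qed
  have predk: "{x\<in>space ?N. P (x k)} \<in> sets ?N"
    using pred_sets1[OF Pm measurable_component_singleton[OF k]] unfolding pred_def .
  have predj: "{x\<in>space ?N. Q (x j)} \<in> sets ?N"
    using pred_sets1[OF Qm measurable_component_singleton[OF j]] unfolding pred_def .
  have transfer: "AE \<omega> in M. R (X k \<omega>) (X j \<omega>)"
    if s: "{x \<in> space ?N. R (x k) (x j)} \<in> sets ?N" and h: "\<forall>t. R (\<phi> k t) (\<phi> j t)" for R
  proof -
    have "AE \<omega> in M. R ((\<lambda>k\<in>CR. \<phi> k (W \<omega>)) k) ((\<lambda>k\<in>CR. \<phi> k (W \<omega>)) j)"
      using h k j by (intro AE_I2) simp
    hence "AE x in distr M ?N (\<lambda>\<omega>. \<lambda>k\<in>CR. \<phi> k (W \<omega>)). R (x k) (x j)"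
      by (rule AE_distr_iff[OF fP s, THEN iffD2])
    hence "AE x in distr M ?N (\<lambda>\<omega>. \<lambda>k\<in>CR. X k \<omega>). R (x k) (x j)"
      unfolding deq .
    hence "AE \<omega> in M. R ((\<lambda>k\<in>CR. X k \<omega>) k) ((\<lambda>k\<in>CR. X k \<omega>) j)"
      by (rule AE_distr_iff[OF fX s, THEN iffD1])
    thus ?thesis using k j by simp
  qed
  have pimp: "{x\<in>space ?N. P (x k) \<longrightarrow> Q (x j)} \<in> sets ?N"
    using pred_intros_logic(4)[where M="?N" and Q="\<lambda>x. P (x k)" and P="\<lambda>x. Q (x j)"] predk predj unfolding pred_def by blast
  have pimp2: "{x\<in>space ?N. Q (x j) \<longrightarrow> P (x k)} \<in> sets ?N"
    using pred_intros_logic(4)[where M="?N" and Q="\<lambda>x. Q (x j)" and P="\<lambda>x. P (x k)"] predk predj unfolding pred_def by blast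
  have "(\<forall>t. P (\<phi> k t) \<longrightarrow> Q (\<phi> j t)) \<or> (\<forall>t. Q (\<phi> j t) \<longrightarrow> P (\<phi> k t))"
  proof (rule ccontr)
    assume "\<not> ?thesis"
    then obtain t1 t2 where t1: "P (\<phi> k t1)" "\<not> Q (\<phi> j t1)" and t2: "Q (\<phi> j t2)" "\<not> P (\<phi> k t2)" by blast
    show False
    proof (cases "t1 \<le> t2")
      case True
      hence "\<phi> k t1 \<le> \<phi> k t2" using mono k by (auto dest: monoD)
      thus False using Pu t1 t2 by blast
    next
      case False
      hence "t2 \<le> t1" by simp
      hence "\<phi> j t2 \<le> \<phi> j t1" using mono j by (auto dest: monoD)
      thus False using Qu t1 t2 by blast
    qed
  qed
  thus ?thesis
  proof
    assume "\<forall>t. P (\<phi> k t) \<longrightarrow> Q (\<phi> j t)"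
    hence "AE \<omega> in M. P (X k \<omega>) \<longrightarrow> Q (X j \<omega>)"
      using transfer[of "\<lambda>a b. P a \<longrightarrow> Q b", OF pimp] by blast
    thus ?thesis ..
  next
    assume "\<forall>t. Q (\<phi> j t) \<longrightarrow> P (\<phi> k t)"
    hence "AE \<omega> in M. Q (X j \<omega>) \<longrightarrow> P (X k \<omega>)"
      using transfer[of "\<lambda>a b. Q b \<longrightarrow> P a", OF pimp2] by blast
    thus ?thesis ..
  qed
qed

lemma sum_agg:
  assumes "finite D" "CR \<subseteq> D"
  shows "(\<Sum>j\<in>agg_index D CR. g j) = (\<Sum>i\<in>D - CR. g (Some i)) + g None"
proof -
  have "(\<Sum>j\<in>agg_index D CR. g j) = (\<Sum>j\<in>Some ` (D - CR). g j) + (\<Sum>j\<in>{None}. g j)"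
    unfolding agg_index_def using assms by (intro sum.union_disjoint) auto
  also have "(\<Sum>j\<in>Some ` (D - CR). g j) = (\<Sum>i\<in>D - CR. g (Some i))"
    by (rule sum.reindex_cong[where l=Some]) auto
  finally show ?thesis by simp
qed

lemma sum_split_CR:
  fixes f :: "'i \<Rightarrow> real"
  assumes "finite D" "CR \<subseteq> D"
  shows "(\<Sum>i\<in>D. f i) = (\<Sum>i\<in>D - CR. f i) + (\<Sum>i\<in>CR. f i)"
  using sum.subset_diff[OF assms(2) assms(1)] by simp



theorem mainTheorem5:
  fixes M :: "'a measure" and X :: "'i \<Rightarrow> 'a \<Rightarrow> real"
    and D CR :: "'i set" and u :: real
  assumes "prob_space M"
    and "finite D" and "CR \<subseteq> D"
    and "\<And>k \<omega>. k \<in> D \<Longrightarrow> \<omega> \<in> space M \<Longrightarrow> 0 \<le> X k \<omega>"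
    and "0 \<le> u"
    and "H1 (\<lambda>_. abs) M X D u" and "H2_abs M X D u"
    and "H1 (\<lambda>_. abs) M (agg_risks X CR) (agg_index D CR) u"
    and "H2_abs M (agg_risks X CR) (agg_index D CR) u"
    and "comonotonic M X CR"
  shows "opt_alloc (\<lambda>_. abs) M (agg_risks X CR) (agg_index D CR) u
       = (\<lambda>j. case j of
                None \<Rightarrow> (\<Sum>k\<in>CR. opt_alloc (\<lambda>_. abs) M X D u k)
              | Some i \<Rightarrow> (if i \<in> D - CR then opt_alloc (\<lambda>_. abs) M X D u i else 0))"
proof -
  interpret P: prob_space M by (rule assms(1))
  define v where "v = opt_alloc (\<lambda>_. abs) M X D u"
  have minX: "is_minimizer (\<lambda>_. abs) M X D u v"
    using assms(6) unfolding H1_def opt_alloc_def v_def by (rule theI')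
  have vA: "v \<in> alloc_set D u" using minX by (simp add: is_minimizer_def)
  have v0: "\<And>k. k \<in> D \<Longrightarrow> 0 \<le> v k" using vA by (simp add: alloc_set_def)
  have vsum: "(\<Sum>k\<in>D. v k) = u" using vA by (simp add: alloc_set_def)
  have measX: "\<And>k. k \<in> D \<Longrightarrow> X k \<in> borel_measurable M" using assms(7) unfolding H2_abs_def by blast
  have finCR: "finite CR" using assms(2,3) finite_subset by blast
  interpret RX: riskset M X D u using assms(1,2,4) measX by unfold_locales auto
  define SX where "SX = (\<lambda>\<omega>. \<Sum>l\<in>D. X l \<omega>)"
  have SX_meas[measurable]: "SX \<in> borel_measurable M" unfolding SX_def using RX.S_meas .
  define p where "p k = measure M {\<omega>\<in>space M. X k \<omega> > v k \<and> SX \<omega> \<le> u}" for k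
  define q where "q k = measure M {\<omega>\<in>space M. X k \<omega> \<ge> v k \<and> SX \<omega> \<le> u}" for k
  define L where "L = Max (insert 0 (p ` D))"
  have finL: "finite (insert 0 (p ` D))" using assms(2) by simp
  have pL: "p k \<le> L" if "k \<in> D" for k unfolding L_def using finL that by (intro Max_ge) auto
  have L0: "0 \<le> L" unfolding L_def using finL by (intro Max_ge) auto
  have qL: "L \<le> q k" if k: "k \<in> D" "v k > 0" for k
  proof -
    have "p j \<le> q k" if j: "j \<in> D" for j
    proof (cases "j = k")
      case True
      have [measurable]: "X k \<in> borel_measurable M" using measX k by auto
      show ?thesis unfolding p_def q_def True
        by (rule P.finite_measure_mono) (auto, measurable)
    next
      case False
      show ?thesis using RX.necess[OF minX k j False] unfolding p_def q_def SX_def .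
    qed
    moreover have "0 \<le> q k" unfolding q_def by simp
    ultimately show ?thesis unfolding L_def using finL by (subst Max_le_iff) auto
  qed
  define ub where "ub = (\<lambda>j. case j of
                None \<Rightarrow> (\<Sum>k\<in>CR. v k)
              | Some i \<Rightarrow> (if i \<in> D - CR then v i else 0))"
  have measA: "\<And>k. k \<in> agg_index D CR \<Longrightarrow> agg_risks X CR k \<in> borel_measurable M"
    using assms(9) unfolding H2_abs_def by blast
  have nnA: "0 \<le> agg_risks X CR k \<omega>" if "k \<in> agg_index D CR" "\<omega> \<in> space M" for k \<omega>
  proof (cases k)
    case None thus ?thesis using that assms(3,4) by (auto simp: agg_risks_def intro!: sum_nonneg)
  next
    case (Some i) thus ?thesis using that assms(4) by (auto simp: agg_risks_def agg_index_def)
  qed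
  interpret RA: riskset M "agg_risks X CR" "agg_index D CR" u
    using assms(1,2) measA nnA by unfold_locales (auto simp: agg_index_def)
  have Sagg: "(\<Sum>l\<in>agg_index D CR. agg_risks X CR l \<omega>) = SX \<omega>" for \<omega>
    using sum_agg[OF assms(2,3), of "\<lambda>l. agg_risks X CR l \<omega>"] sum_split_CR[OF assms(2,3), of "\<lambda>l. X l \<omega>"]
    by (simp add: agg_risks_def SX_def)
  have CRle: "(\<Sum>k\<in>CR. v k) \<le> u"
    using vsum sum_mono2[OF assms(2,3), of v] v0 by auto
  have ubA: "ub \<in> alloc_set (agg_index D CR) u"
  proof -
    have "(\<Sum>j\<in>agg_index D CR. ub j) = (\<Sum>i\<in>D - CR. v i) + (\<Sum>k\<in>CR. v k)"
      using sum_agg[OF assms(2,3), of ub] by (simp add: ub_def)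
    also have "\<dots> = u" using sum_split_CR[OF assms(2,3), of v] vsum by simp
    finally have s: "(\<Sum>j\<in>agg_index D CR. ub j) = u" .
    have b: "0 \<le> ub j \<and> ub j \<le> u" if "j \<in> agg_index D CR" for j
    proof (cases j)
      case None thus ?thesis using CRle v0 assms(3) by (auto simp: ub_def intro!: sum_nonneg)
    next
      case (Some i) thus ?thesis using vA assms(5) by (auto simp: ub_def alloc_set_def)
    qed
    have z: "ub j = 0" if "j \<notin> agg_index D CR" for j
      using that by (cases j) (auto simp: ub_def agg_index_def)
    show ?thesis unfolding alloc_set_def using s b z by blast
  qed
  have claimA: "measure M {\<omega>\<in>space M. (\<Sum>k\<in>CR. X k \<omega>) > (\<Sum>k\<in>CR. v k) \<and> SX \<omega> \<le> u} \<le> L"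
  proof (cases "CR = {}")
    case True thus ?thesis using L0 by simp
  next
    case False
    define R where "R j k \<longleftrightarrow> (AE \<omega> in M. X j \<omega> > v j \<longrightarrow> X k \<omega> > v k)" for j k
    have tot: "\<forall>a\<in>CR. \<forall>b\<in>CR. R a b \<or> R b a"
    proof (intro ballI)
      fix a b assume a: "a \<in> CR" and b: "b \<in> CR"
      have "(AE \<omega> in M. (\<lambda>y. y > v a) (X a \<omega>) \<longrightarrow> (\<lambda>y. y > v b) (X b \<omega>)) \<or>
            (AE \<omega> in M. (\<lambda>y. y > v b) (X b \<omega>) \<longrightarrow> (\<lambda>y. y > v a) (X a \<omega>))"
        by (rule comon_AE[OF assms(10) _ a b]) (use measX assms(3) in auto)
      thus "R a b \<or> R b a" unfolding R_def by simp
    qed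
    have tr: "\<forall>a\<in>CR. \<forall>b\<in>CR. \<forall>c\<in>CR. R a b \<longrightarrow> R b c \<longrightarrow> R a c"
    proof (intro ballI impI)
      fix a b c assume "R a b" "R b c"
      thus "R a c" unfolding R_def by eventually_elim blast
    qed
    obtain m where m: "m \<in> CR" "\<forall>x\<in>CR. R x m" using finite_total_max[OF finCR False tot tr] by blast
    have ae: "AE \<omega> in M. \<forall>x\<in>CR. X x \<omega> > v x \<longrightarrow> X m \<omega> > v m"
      using m(2) unfolding R_def by (intro AE_finite_allI[OF finCR]) auto
    have [measurable]: "X m \<in> borel_measurable M" using measX m assms(3) by auto
    have "measure M {\<omega>\<in>space M. (\<Sum>k\<in>CR. X k \<omega>) > (\<Sum>k\<in>CR. v k) \<and> SX \<omega> \<le> u}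
        \<le> measure M {\<omega>\<in>space M. X m \<omega> > v m \<and> SX \<omega> \<le> u}"
    proof (rule P.finite_measure_mono_AE)
      show "{\<omega>\<in>space M. X m \<omega> > v m \<and> SX \<omega> \<le> u} \<in> sets M" by measurable
      show "AE x\<in>{\<omega>\<in>space M. (\<Sum>k\<in>CR. X k \<omega>) > (\<Sum>k\<in>CR. v k) \<and> SX \<omega> \<le> u} in M.
              x \<in> {\<omega>\<in>space M. X m \<omega> > v m \<and> SX \<omega> \<le> u}"
        using ae
      proof eventually_elim
        case (elim x)
        show ?case
        proof
          assume x: "x \<in> {\<omega>\<in>space M. (\<Sum>k\<in>CR. X k \<omega>) > (\<Sum>k\<in>CR. v k) \<and> SX \<omega> \<le> u}"
          have "\<exists>j\<in>CR. X j x > v j"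
          proof (rule ccontr)
            assume "\<not> ?thesis"
            hence "(\<Sum>k\<in>CR. X k x) \<le> (\<Sum>k\<in>CR. v k)" by (intro sum_mono) auto
            thus False using x by simp
          qed
          thus "x \<in> {\<omega>\<in>space M. X m \<omega> > v m \<and> SX \<omega> \<le> u}" using elim x by auto
        qed
      qed
    qed
    also have "\<dots> = p m" unfolding p_def ..
    also have "\<dots> \<le> L" using pL m assms(3) by auto
    finally show ?thesis .
  qed
  have claimB: "L \<le> measure M {\<omega>\<in>space M. (\<Sum>k\<in>CR. X k \<omega>) \<ge> (\<Sum>k\<in>CR. v k) \<and> SX \<omega> \<le> u}"
    if pos: "(\<Sum>k\<in>CR. v k) > 0"
  proof -
    define CR' where "CR' = {k\<in>CR. v k > 0}"
    have finCR': "finite CR'" using finCR unfolding CR'_def by simp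
    have ne: "CR' \<noteq> {}"
    proof
      assume "CR' = {}"
      hence "\<forall>k\<in>CR. v k = 0" using v0 assms(3) unfolding CR'_def by force
      thus False using pos by simp
    qed
    define R where "R a b \<longleftrightarrow> (AE \<omega> in M. X b \<omega> \<ge> v b \<longrightarrow> X a \<omega> \<ge> v a)" for a b
    have tot: "\<forall>a\<in>CR'. \<forall>b\<in>CR'. R a b \<or> R b a"
    proof (intro ballI)
      fix a b assume a: "a \<in> CR'" and b: "b \<in> CR'"
      have "(AE \<omega> in M. (\<lambda>y. y \<ge> v a) (X a \<omega>) \<longrightarrow> (\<lambda>y. y \<ge> v b) (X b \<omega>)) \<or>
            (AE \<omega> in M. (\<lambda>y. y \<ge> v b) (X b \<omega>) \<longrightarrow> (\<lambda>y. y \<ge> v a) (X a \<omega>))"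
        by (rule comon_AE[OF assms(10) _ _ _]) (use measX assms(3) a b in \<open>auto simp: CR'_def\<close>)
      thus "R a b \<or> R b a" unfolding R_def by blast
    qed
    have tr: "\<forall>a\<in>CR'. \<forall>b\<in>CR'. \<forall>c\<in>CR'. R a b \<longrightarrow> R b c \<longrightarrow> R a c"
    proof (intro ballI impI)
      fix a b c assume "R a b" "R b c"
      thus "R a c" unfolding R_def by eventually_elim blast
    qed
    obtain m where m: "m \<in> CR'" "\<forall>x\<in>CR'. R x m" using finite_total_max[OF finCR' ne tot tr] by blast
    have mD: "m \<in> D" "v m > 0" using m(1) assms(3) unfolding CR'_def by auto
    have ae: "AE \<omega> in M. \<forall>x\<in>CR'. X m \<omega> \<ge> v m \<longrightarrow> X x \<omega> \<ge> v x"
      using m(2) unfolding R_def by (intro AE_finite_allI[OF finCR']) auto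
    have [measurable]: "\<And>k. k \<in> CR \<Longrightarrow> X k \<in> borel_measurable M" using measX assms(3) by auto
    have "L \<le> q m" using qL mD by auto
    also have "q m = measure M {\<omega>\<in>space M. X m \<omega> \<ge> v m \<and> SX \<omega> \<le> u}" unfolding q_def ..
    also have "\<dots> \<le> measure M {\<omega>\<in>space M. (\<Sum>k\<in>CR. X k \<omega>) \<ge> (\<Sum>k\<in>CR. v k) \<and> SX \<omega> \<le> u}"
    proof (rule P.finite_measure_mono_AE)
      have "(\<lambda>\<omega>. \<Sum>k\<in>CR. X k \<omega>) \<in> borel_measurable M" by measurable
      thus "{\<omega>\<in>space M. (\<Sum>k\<in>CR. X k \<omega>) \<ge> (\<Sum>k\<in>CR. v k) \<and> SX \<omega> \<le> u} \<in> sets M" by measurable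
      show "AE x\<in>{\<omega>\<in>space M. X m \<omega> \<ge> v m \<and> SX \<omega> \<le> u} in M.
              x \<in> {\<omega>\<in>space M. (\<Sum>k\<in>CR. X k \<omega>) \<ge> (\<Sum>k\<in>CR. v k) \<and> SX \<omega> \<le> u}"
        using ae
      proof eventually_elim
        case (elim x)
        show ?case
        proof
          assume x: "x \<in> {\<omega>\<in>space M. X m \<omega> \<ge> v m \<and> SX \<omega> \<le> u}"
          have "v k \<le> X k x" if k: "k \<in> CR" for k
          proof (cases "v k > 0")
            case True thus ?thesis using elim x k unfolding CR'_def by auto
          next
            case False
            hence "v k = 0" using v0 k assms(3) by force
            thus ?thesis using assms(4) k assms(3) x by auto
          qed
          hence "(\<Sum>k\<in>CR. v k) \<le> (\<Sum>k\<in>CR. X k x)" by (intro sum_mono) auto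
          thus "x \<in> {\<omega>\<in>space M. (\<Sum>k\<in>CR. X k \<omega>) \<ge> (\<Sum>k\<in>CR. v k) \<and> SX \<omega> \<le> u}" using x by auto
        qed
      qed
    qed
    finally show ?thesis .
  qed
  have minA: "is_minimizer (\<lambda>_. abs) M (agg_risks X CR) (agg_index D CR) u ub"
  proof (rule RA.suff[OF ubA, where L=L])
    show "\<forall>j\<in>agg_index D CR. measure M {\<omega>\<in>space M. agg_risks X CR j \<omega> > ub j
            \<and> (\<Sum>l\<in>agg_index D CR. agg_risks X CR l \<omega>) \<le> u} \<le> L"
    proof
      fix j assume j: "j \<in> agg_index D CR"
      show "measure M {\<omega>\<in>space M. agg_risks X CR j \<omega> > ub j
            \<and> (\<Sum>l\<in>agg_index D CR. agg_risks X CR l \<omega>) \<le> u} \<le> L"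
      proof (cases j)
        case None thus ?thesis unfolding Sagg using claimA by (simp add: agg_risks_def ub_def)
      next
        case (Some i)
        hence i: "i \<in> D - CR" using j by (auto simp: agg_index_def)
        thus ?thesis unfolding Sagg using pL[of i] Some by (simp add: agg_risks_def ub_def p_def)
      qed
    qed
    show "\<forall>j\<in>agg_index D CR. ub j > 0 \<longrightarrow> measure M {\<omega>\<in>space M. agg_risks X CR j \<omega> \<ge> ub j
            \<and> (\<Sum>l\<in>agg_index D CR. agg_risks X CR l \<omega>) \<le> u} \<ge> L"
    proof (intro ballI impI)
      fix j assume j: "j \<in> agg_index D CR" and pos: "ub j > 0"
      show "measure M {\<omega>\<in>space M. agg_risks X CR j \<omega> \<ge> ub j
            \<and> (\<Sum>l\<in>agg_index D CR. agg_risks X CR l \<omega>) \<le> u} \<ge> L"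
      proof (cases j)
        case None thus ?thesis unfolding Sagg using claimB pos by (simp add: agg_risks_def ub_def)
      next
        case (Some i)
        hence i: "i \<in> D - CR" using j by (auto simp: agg_index_def)
        hence "v i > 0" using pos Some by (simp add: ub_def)
        thus ?thesis unfolding Sagg using qL[of i] i Some by (simp add: agg_risks_def ub_def q_def)
      qed
    qed
  qed
  have "opt_alloc (\<lambda>_. abs) M (agg_risks X CR) (agg_index D CR) u = ub"
    using assms(8) minA unfolding H1_def opt_alloc_def
    by (rule the1_equality[where P="is_minimizer (\<lambda>_. abs) M (agg_risks X CR) (agg_index D CR) u"])
  thus ?thesis unfolding ub_def v_def .
qed

end
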